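(* Let $S=\mathbb{K}[x_1,\dots,x_n]$ and let $I\subseteq S$ be a monomial ideal which contains no variable, and let $s\geq 1$ be an integer. Assume that $I^s$ has linear quotients with respect to (the restriction to $G(I^s)$ of) a monomial order $<$ on $S$. Then there exists a linear order $\prec$ on $G(I)$ such that for any two monomials $u\prec v$ in $G(I)$ with $\gcd(u,v)=1$ there exists a monomial $w\in G(I)$ with $w\neq u,v$, $u\prec w$, and $\operatorname{supp}(w)\subseteq\operatorname{supp}(u)\cup\operatorname{supp}(v)$.
   Context: $G(I)$ denotes the set of minimal monomial generators of a monomial ideal $I$; $\operatorname{supp}(u)$ is the set of variables dividing a monomial $u$. A monomial order is a total order on monomials of $S$ which is multiplicative ($u<v\Rightarrow uw<vw$) and has $1$ as its least element. If $u_1\prec u_2\prec\dots\prec u_t$ is a linear order on $G(I)$, then $I$ has linear quotients with respect to this order if for every $2\leq i\leq t$ the colon ideal $(u_1,\dots,u_{i-1}):u_i$ is generated by a subset of the variables. *)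

theory Defs
  imports Main
begin

text \<open>Monomials of S = K[x_1,...,x_n] are represented by exponent vectors
  a :: nat => nat with a i = 0 for i >= n (variable x_(i+1) has index i).
  A monomial ideal is determined by the set of monomials it contains; this set is
  closed under multiplication by arbitrary monomials.  The field K plays no role.\<close>

definition monoms :: "nat \<Rightarrow> (nat \<Rightarrow> nat) set" where
  "monoms n = {a. \<forall>i\<ge>n. a i = 0}"

definition mmult :: "(nat \<Rightarrow> nat) \<Rightarrow> (nat \<Rightarrow> nat) \<Rightarrow> (nat \<Rightarrow> nat)" where
  "mmult a b = (\<lambda>i. a i + b i)"

definition mdvd :: "(nat \<Rightarrow> nat) \<Rightarrow> (nat \<Rightarrow> nat) \<Rightarrow> bool" where
  "mdvd a b \<longleftrightarrow> (\<forall>i. a i \<le> b i)"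

definition var :: "nat \<Rightarrow> (nat \<Rightarrow> nat)" where
  "var i = (\<lambda>j. if j = i then 1 else 0)"

definition supp :: "(nat \<Rightarrow> nat) \<Rightarrow> nat set" where
  "supp a = {i. a i \<noteq> 0}"

definition monomial_ideal :: "nat \<Rightarrow> (nat \<Rightarrow> nat) set \<Rightarrow> bool" where
  "monomial_ideal n I \<longleftrightarrow> I \<subseteq> monoms n \<and>
     (\<forall>u\<in>I. \<forall>m\<in>monoms n. mmult u m \<in> I)"

definition gens :: "(nat \<Rightarrow> nat) set \<Rightarrow> (nat \<Rightarrow> nat) set" where
  "gens I = {u\<in>I. \<forall>v\<in>I. mdvd v u \<longrightarrow> v = u}"

definition ideal_pow :: "nat \<Rightarrow> (nat \<Rightarrow> nat) set \<Rightarrow> nat \<Rightarrow> (nat \<Rightarrow> nat) set" where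
  "ideal_pow n I s = {m\<in>monoms n. \<exists>us. length us = s \<and> set us \<subseteq> I \<and>
      mdvd (foldr mmult us (\<lambda>_. 0)) m}"

definition monomial_order :: "nat \<Rightarrow> ((nat \<Rightarrow> nat) \<Rightarrow> (nat \<Rightarrow> nat) \<Rightarrow> bool) \<Rightarrow> bool" where
  "monomial_order n lt \<longleftrightarrow>
     (\<forall>a\<in>monoms n. \<not> lt a a) \<and>
     (\<forall>a\<in>monoms n. \<forall>b\<in>monoms n. \<forall>c\<in>monoms n. lt a b \<longrightarrow> lt b c \<longrightarrow> lt a c) \<and>
     (\<forall>a\<in>monoms n. \<forall>b\<in>monoms n. a = b \<or> lt a b \<or> lt b a) \<and>
     (\<forall>a\<in>monoms n. \<forall>b\<in>monoms n. \<forall>c\<in>monoms n. lt a b \<longrightarrow> lt (mmult a c) (mmult b c)) \<and>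
     (\<forall>a\<in>monoms n. a \<noteq> (\<lambda>_. 0) \<longrightarrow> lt (\<lambda>_. 0) a)"

definition strict_linear_order_on :: "'a set \<Rightarrow> ('a \<Rightarrow> 'a \<Rightarrow> bool) \<Rightarrow> bool" where
  "strict_linear_order_on A r \<longleftrightarrow>
     (\<forall>a\<in>A. \<not> r a a) \<and>
     (\<forall>a\<in>A. \<forall>b\<in>A. \<forall>c\<in>A. r a b \<longrightarrow> r b c \<longrightarrow> r a c) \<and>
     (\<forall>a\<in>A. \<forall>b\<in>A. a = b \<or> r a b \<or> r b a)"

text \<open>I has linear quotients w.r.t. the order prec on G(I): for every u in G(I), the colon
  ideal (v : v in G(I), v prec u) : u, whose monomials are those m with some such v
  dividing m*u, is generated by a subset V of the variables.  (For the first generator the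
  colon ideal is 0, generated by the empty set of variables, so the condition is vacuous.)\<close>
definition linear_quotients :: "nat \<Rightarrow> (nat \<Rightarrow> nat) set \<Rightarrow> ((nat \<Rightarrow> nat) \<Rightarrow> (nat \<Rightarrow> nat) \<Rightarrow> bool) \<Rightarrow> bool" where
  "linear_quotients n I prec \<longleftrightarrow>
     (\<forall>u\<in>gens I. \<exists>V\<subseteq>{..<n}.
        {m\<in>monoms n. \<exists>v\<in>gens I. prec v u \<and> mdvd v (mmult m u)}
        = {m\<in>monoms n. \<exists>i\<in>V. mdvd (var i) m})"

end

theory Submission
  imports Defs
begin

abbreviation P :: "(nat \<Rightarrow> nat) list \<Rightarrow> (nat \<Rightarrow> nat)" where
  "P ws \<equiv> foldr mmult ws (\<lambda>_. 0)"

lemma P_apply: "P ws i = (\<Sum>w\<leftarrow>ws. w i)"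
  by (induction ws) (auto simp: mmult_def)

lemma P_rep: "P (replicate k u) = (\<lambda>i. k * u i)"
  by (induction k) (auto simp: mmult_def)

lemma mmult_monoms: "a \<in> monoms n \<Longrightarrow> b \<in> monoms n \<Longrightarrow> mmult a b \<in> monoms n"
  by (auto simp: monoms_def mmult_def)

lemma P_monoms: "set ws \<subseteq> monoms n \<Longrightarrow> P ws \<in> monoms n"
  by (induction ws) (auto simp: monoms_def mmult_def)

lemma mmult_comm: "mmult a b = mmult b a"
  by (auto simp: mmult_def)

lemma mmult_zero: "mmult (\<lambda>_. 0) a = a"
  by (auto simp: mmult_def)

lemma mdvd_P: "w \<in> set ws \<Longrightarrow> mdvd w (P ws)"
  unfolding mdvd_def P_apply
proof (intro allI)
  fix i assume w: "w \<in> set ws"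
  have "w i \<in> set (map (\<lambda>w. w i) ws)" using w by simp
  then show "w i \<le> sum_list (map (\<lambda>w. w i) ws)" by (rule member_le_sum_list) simp
qed

lemma mult_le:
  assumes mo: "monomial_order n lt" and "a \<in> monoms n" "b \<in> monoms n" "c \<in> monoms n"
    and "a = b \<or> lt a b"
  shows "mmult c a = mmult c b \<or> lt (mmult c a) (mmult c b)"
  using assms unfolding monomial_order_def by (metis mmult_comm)

lemma le_trans':
  assumes mo: "monomial_order n lt" and "a \<in> monoms n" "b \<in> monoms n" "c \<in> monoms n"
    and "a = b \<or> lt a b" "b = c \<or> lt b c"
  shows "a = c \<or> lt a c"
  using assms unfolding monomial_order_def by metis

lemma P_ge:
  assumes mo: "monomial_order n lt" and u: "u \<in> monoms n" and ws: "set ws \<subseteq> monoms n"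
    and "\<forall>w\<in>set ws. w = u \<or> lt u w"
  shows "P (replicate (length ws) u) = P ws \<or> lt (P (replicate (length ws) u)) (P ws)"
  using ws assms(4)
proof (induction ws)
  case Nil then show ?case by simp
next
  case (Cons w ws)
  let ?R = "P (replicate (length ws) u)" and ?Q = "P ws"
  have R: "?R \<in> monoms n" by (rule P_monoms) (use u in auto)
  have Q: "?Q \<in> monoms n" using P_monoms Cons by auto
  have w: "w \<in> monoms n" using Cons by auto
  have 1: "mmult u ?R = mmult u ?Q \<or> lt (mmult u ?R) (mmult u ?Q)"
    using mult_le[OF mo R Q u] Cons by auto
  have 2: "mmult ?Q u = mmult ?Q w \<or> lt (mmult ?Q u) (mmult ?Q w)"
    using mult_le[OF mo u w Q] Cons by auto
  have "mmult u ?R = mmult w ?Q \<or> lt (mmult u ?R) (mmult w ?Q)"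
    using le_trans'[OF mo mmult_monoms[OF u R] mmult_monoms[OF u Q] mmult_monoms[OF w Q] 1]
      2 by (metis mmult_comm)
  then show ?case by simp
qed

lemma dvd_le:
  assumes mo: "monomial_order n lt" and a: "a \<in> monoms n" and b: "b \<in> monoms n"
    and "mdvd a b"
  shows "a = b \<or> lt a b"
proof -
  define c where "c = (\<lambda>i. b i - a i)"
  have c: "c \<in> monoms n" using b by (auto simp: monoms_def c_def)
  have bc: "b = mmult c a" using assms(4) by (auto simp: mdvd_def mmult_def c_def)
  show ?thesis
  proof (cases "c = (\<lambda>_. 0)")
    case True then show ?thesis using bc mmult_zero by simp
  next
    case False
    then have "lt (\<lambda>_. 0) c" using mo c unfolding monomial_order_def by blast
    moreover have z: "(\<lambda>_. 0::nat) \<in> monoms n" by (simp add: monoms_def)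
    moreover have "\<forall>a\<in>monoms n. \<forall>b\<in>monoms n. \<forall>c\<in>monoms n. lt a b \<longrightarrow> lt (mmult a c) (mmult b c)"
      using mo unfolding monomial_order_def by blast
    ultimately have "lt (mmult (\<lambda>_. 0) a) (mmult c a)"
      using c a by blast
    then show ?thesis using bc mmult_zero by simp
  qed
qed

lemma min_div:
  assumes J: "J \<subseteq> monoms n" and a: "a \<in> J"
  shows "\<exists>g\<in>gens J. mdvd g a"
proof -
  let ?f = "\<lambda>b. \<Sum>i<n. b i"
  obtain g where g: "g \<in> J \<and> mdvd g a" and gm: "\<forall>b. b \<in> J \<and> mdvd b a \<longrightarrow> ?f g \<le> ?f b"
    using ex_has_least_nat[of "\<lambda>b. b \<in> J \<and> mdvd b a" a ?f] a
    by (auto simp: mdvd_def)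
  have "g \<in> gens J"
    unfolding gens_def
  proof (safe)
    show "g \<in> J" using g by simp
    fix b assume b: "b \<in> J" "mdvd b g"
    then have "mdvd b a" using g by (auto simp: mdvd_def intro: le_trans)
    then have ge: "?f g \<le> ?f b" using gm b by blast
    have eq: "\<forall>i<n. b i = g i"
    proof (rule ccontr)
      assume "\<not> (\<forall>i<n. b i = g i)"
      then obtain i where "i < n" "b i \<noteq> g i" by auto
      moreover have "b i \<le> g i" using b(2) by (simp add: mdvd_def)
      ultimately have "b i < g i" by simp
      then have "?f b < ?f g"
        using b(2) \<open>i<n\<close> unfolding mdvd_def
        by (intro sum_strict_mono_ex1) auto
      then show False using ge by simp
    qed
    have "b \<in> monoms n" "g \<in> monoms n" using b g J by auto
    then show "b = g" using eq unfolding monoms_def mem_Collect_eq by (intro ext) (metis not_le)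
  qed
  then show ?thesis using g by blast
qed

theorem proposition2p7:
  fixes n s :: nat and I :: "(nat \<Rightarrow> nat) set"
    and lt :: "(nat \<Rightarrow> nat) \<Rightarrow> (nat \<Rightarrow> nat) \<Rightarrow> bool"
  assumes "monomial_ideal n I"
    and "\<forall>i<n. var i \<notin> I"
    and "s \<ge> 1"
    and "monomial_order n lt"
    and "linear_quotients n (ideal_pow n I s) lt"
  shows "\<exists>prec. strict_linear_order_on (gens I) prec \<and>
    (\<forall>u\<in>gens I. \<forall>v\<in>gens I. prec u v \<and> supp u \<inter> supp v = {} \<longrightarrow>
       (\<exists>w\<in>gens I. w \<noteq> u \<and> w \<noteq> v \<and> prec u w \<and> supp w \<subseteq> supp u \<union> supp v))"
proof -
  note mi = assms(1) and nv = assms(2) and s1 = assms(3) and mo = assms(4) and lq = assms(5)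
  have Im: "I \<subseteq> monoms n" using mi by (simp add: monomial_ideal_def)
  have gI: "gens I \<subseteq> monoms n" using Im by (auto simp: gens_def)
  have irr: "\<And>a. a \<in> monoms n \<Longrightarrow> \<not> lt a a" using mo by (simp add: monomial_order_def)
  have tr: "\<And>a b c. a \<in> monoms n \<Longrightarrow> b \<in> monoms n \<Longrightarrow> c \<in> monoms n \<Longrightarrow> lt a b \<Longrightarrow> lt b c \<Longrightarrow> lt a c"
    using mo unfolding monomial_order_def by blast
  have tot: "\<And>a b. a \<in> monoms n \<Longrightarrow> b \<in> monoms n \<Longrightarrow> a = b \<or> lt a b \<or> lt b a"
    using mo unfolding monomial_order_def by blast
  have slo: "strict_linear_order_on (gens I) (\<lambda>a b. lt b a)"
  proof (unfold strict_linear_order_on_def, intro conjI ballI impI)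
    fix a assume "a \<in> gens I" then show "\<not> lt a a" using irr gI by auto
  next
    fix a b c assume "a \<in> gens I" "b \<in> gens I" "c \<in> gens I" "lt b a" "lt c b"
    then show "lt c a" using tr[of c b a] gI by auto
  next
    fix a b assume "a \<in> gens I" "b \<in> gens I"
    then show "a = b \<or> lt b a \<or> lt a b" using tot[of a b] gI by auto
  qed
  define J where "J = ideal_pow n I s"
  have Jm: "J \<subseteq> monoms n" by (auto simp: J_def ideal_pow_def)
  have gJ: "gens J \<subseteq> monoms n" using Jm by (auto simp: gens_def)
  have K: "\<exists>w\<in>set ws. lt w u" if u: "u \<in> monoms n" and ws: "length ws = s" "set ws \<subseteq> I"
      and l: "lt (P ws) (P (replicate s u))" for u ws
  proof (rule ccontr)
    assume "\<not> ?thesis"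
    then have "\<forall>w\<in>set ws. w = u \<or> lt u w" using tot u ws Im by blast
    then have "P (replicate (length ws) u) = P ws \<or> lt (P (replicate (length ws) u)) (P ws)"
      using P_ge[OF mo u] ws Im by blast
    then have D: "P (replicate s u) = P ws \<or> lt (P (replicate s u)) (P ws)" using ws(1) by simp
    have qm: "P ws \<in> monoms n" using P_monoms ws Im by blast
    have Rm: "P (replicate s u) \<in> monoms n" by (rule P_monoms) (use u in auto)
    show False using D l irr[OF qm] tr[OF qm Rm qm] by auto
  qed
  have G: "\<exists>w'\<in>gens I. mdvd w' w \<and> lt w' u" if w: "w \<in> I" and u: "u \<in> monoms n" and l: "lt w u" for w u
  proof -
    obtain w' where w': "w' \<in> gens I" "mdvd w' w" using min_div[OF Im w] by blast
    have "w' = w \<or> lt w' w" using dvd_le[OF mo _ _ w'(2)] w' gI w Im by blast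
    then show ?thesis using w' l tr[of w' w u] gI Im w u by auto
  qed
  have main: "\<exists>w\<in>gens I. w \<noteq> u \<and> w \<noteq> v \<and> lt w u \<and> supp w \<subseteq> supp u \<union> supp v"
    if u: "u \<in> gens I" and v: "v \<in> gens I" and vu: "lt v u" and disj: "supp u \<inter> supp v = {}" for u v
  proof -
    have um: "u \<in> monoms n" and vm: "v \<in> monoms n" using u v gI by auto
    have uI: "u \<in> I" and vI: "v \<in> I" using u v by (auto simp: gens_def)
    have v0: "v \<noteq> (\<lambda>_. 0)"
    proof
      assume "v = (\<lambda>_. 0)"
      then have "mdvd v u" by (simp add: mdvd_def)
      then have "v = u" using u vI by (auto simp: gens_def)
      then show False using vu irr um by simp
    qed
    define U where "U = P (replicate s u)"
    have Uapp: "U i = s * u i" for i unfolding U_def P_rep by simp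
    have Um: "U \<in> monoms n" unfolding U_def by (rule P_monoms) (use um in auto)
    have UJ: "U \<in> J" unfolding J_def ideal_pow_def using Um uI
      by (auto simp: U_def mdvd_def intro!: exI[of _ "replicate s u"])
    show ?thesis
    proof (cases "U \<in> gens J")
      case False
      then obtain g where g: "g \<in> J" "mdvd g U" "g \<noteq> U" using UJ by (auto simp: gens_def)
      then obtain ws where ws: "length ws = s" "set ws \<subseteq> I" "mdvd (P ws) g"
        by (auto simp: J_def ideal_pow_def)
      have qm: "P ws \<in> monoms n" using P_monoms ws Im by blast
      have qU: "mdvd (P ws) U" using ws(3) g(2) by (auto simp: mdvd_def intro: le_trans)
      have "P ws \<noteq> U"
      proof
        assume "P ws = U"
        then have "\<forall>i. g i = U i" using ws(3) g(2) unfolding mdvd_def by (metis le_antisym)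
        then show False using g(3) by auto
      qed
      then have "lt (P ws) U" using dvd_le[OF mo qm Um qU] by simp
      then obtain w where w: "w \<in> set ws" "lt w u" using K[OF um ws(1,2)] U_def by blast
      then obtain w' where w': "w' \<in> gens I" "mdvd w' w" "lt w' u" using G[OF _ um] ws(2) by blast
      have "mdvd w' U" using w'(2) mdvd_P[OF w(1)] qU unfolding mdvd_def by (meson le_trans)
      then have sw: "supp w' \<subseteq> supp u" unfolding supp_def mdvd_def Uapp
        apply (intro subsetI) apply simp
        subgoal for x by (erule allE[of _ x]) (cases "u x = 0", auto)
        done
      have "w' \<noteq> v"
      proof
        assume "w' = v"
        then have "supp v = {}" using sw disj by auto
        then have "v = (\<lambda>_. 0)" by (auto simp: supp_def)
        then show False using v0 by simp
      qed
      moreover have "w' \<noteq> u" using w'(3) irr um by auto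
      ultimately show ?thesis using w' sw by blast
    next
      case True
      define P2 where "P2 = P (v # replicate (s-1) u)"
      define R where "R = P (replicate (s-1) u)"
      have Rm: "R \<in> monoms n" unfolding R_def by (rule P_monoms) (use um in auto)
      obtain k where sk: "s = Suc k" using s1 by (cases s) auto
      have UR: "U = mmult u R" unfolding U_def R_def sk by simp
      have P2R: "P2 = mmult v R" by (simp add: P2_def R_def)
      have P2m: "P2 \<in> monoms n" using P2R mmult_monoms vm Rm by simp
      have P2J: "P2 \<in> J" unfolding J_def ideal_pow_def using P2m uI vI s1
        by (auto simp: P2_def mdvd_def intro!: exI[of _ "v # replicate (s-1) u"])
      have mul: "\<forall>a\<in>monoms n. \<forall>b\<in>monoms n. \<forall>c\<in>monoms n. lt a b \<longrightarrow> lt (mmult a c) (mmult b c)"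
        using mo unfolding monomial_order_def by blast
      have "lt (mmult v R) (mmult u R)" using mul vu vm um Rm by blast
      then have lP2: "lt P2 U" using UR P2R by simp
      obtain h where h: "h \<in> gens J" "mdvd h P2" using min_div[OF Jm P2J] by blast
      have hm: "h \<in> monoms n" using h gJ by auto
      have "h = P2 \<or> lt h P2" using dvd_le[OF mo hm P2m h(2)] .
      then have lh: "lt h U" using lP2 tr[OF hm P2m Um] by auto
      have "mdvd h (mmult v U)" unfolding mdvd_def
      proof
        fix i
        have "h i \<le> P2 i" using h(2) by (simp add: mdvd_def)
        also have "\<dots> \<le> mmult v U i" by (simp add: P2R UR mmult_def)
        finally show "h i \<le> mmult v U i" .
      qed
      then have "v \<in> {m\<in>monoms n. \<exists>v\<in>gens J. lt v U \<and> mdvd v (mmult m U)}"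
        using vm h(1) lh by blast
      moreover have lqJ: "\<forall>u\<in>gens J. \<exists>V\<subseteq>{..<n}.
        {m\<in>monoms n. \<exists>v\<in>gens J. lt v u \<and> mdvd v (mmult m u)}
        = {m\<in>monoms n. \<exists>i\<in>V. mdvd (var i) m}"
        using lq unfolding linear_quotients_def J_def .
      from bspec[OF lqJ True] obtain V where V: "V \<subseteq> {..<n}"
        "{m\<in>monoms n. \<exists>v\<in>gens J. lt v U \<and> mdvd v (mmult m U)} = {m\<in>monoms n. \<exists>i\<in>V. mdvd (var i) m}"
        by (elim exE conjE)
      ultimately have "v \<in> {m\<in>monoms n. \<exists>i\<in>V. mdvd (var i) m}" by simp
      then obtain i where i: "i \<in> V" "mdvd (var i) v" by blast
      have iv: "v i \<ge> 1" using i(2) unfolding mdvd_def var_def by (auto dest: spec[of _ i])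
      have inn: "i < n" using i V by auto
      have varm: "var i \<in> monoms n" using inn by (auto simp: monoms_def var_def)
      have "var i \<in> {m\<in>monoms n. \<exists>i\<in>V. mdvd (var i) m}"
        using varm i(1) by (auto simp: mdvd_def)
      then have "var i \<in> {m\<in>monoms n. \<exists>v\<in>gens J. lt v U \<and> mdvd v (mmult m U)}"
        using V(2) by simp
      then obtain h' where h': "h' \<in> gens J" "lt h' U" "mdvd h' (mmult (var i) U)"
        by blast
      have h'm: "h' \<in> monoms n" using h' gJ by auto
      have "h' \<in> J" using h' by (auto simp: gens_def)
      then obtain ws where ws: "length ws = s" "set ws \<subseteq> I" "mdvd (P ws) h'"
        by (auto simp: J_def ideal_pow_def)
      have qm: "P ws \<in> monoms n" using P_monoms ws Im by blast
      have "P ws = h' \<or> lt (P ws) h'" using dvd_le[OF mo qm h'm ws(3)] .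
      then have "lt (P ws) U" using h'(2) tr[OF qm h'm Um] by auto
      then obtain w where w: "w \<in> set ws" "lt w u" using K[OF um ws(1,2)] U_def by blast
      then obtain w' where w': "w' \<in> gens I" "mdvd w' w" "lt w' u" using G[OF _ um] ws(2) by blast
      have dv: "w' j \<le> var i j + s * u j" for j
      proof -
        have a: "w' j \<le> w j" using w'(2) by (simp add: mdvd_def)
        have b: "w j \<le> P ws j" using mdvd_P[OF w(1)] by (simp add: mdvd_def)
        have c: "P ws j \<le> h' j" using ws(3) by (simp add: mdvd_def)
        have d: "h' j \<le> var i j + s * u j" using h'(3) by (simp add: mdvd_def mmult_def Uapp)
        show ?thesis using a b c d by linarith
      qed
      have sw: "supp w' \<subseteq> supp u \<union> supp v"
      proof
        fix j assume "j \<in> supp w'"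
        then have "w' j \<noteq> 0" by (simp add: supp_def)
        show "j \<in> supp u \<union> supp v"
        proof (cases "j = i")
          case True then show ?thesis using iv by (simp add: supp_def)
        next
          case False
          then have "w' j \<le> s * u j" using dv[of j] by (simp add: var_def)
          then have "u j \<noteq> 0" using \<open>w' j \<noteq> 0\<close> by (cases "u j = 0") auto
          then show ?thesis by (simp add: supp_def)
        qed
      qed
      have "w' \<noteq> v"
      proof
        assume wv: "w' = v"
        have ui: "u i = 0" using disj iv by (auto simp: supp_def)
        have "v = var i"
        proof
          fix j show "v j = var i j"
          proof (cases "j = i")
            case True then show ?thesis using dv[of i] wv ui iv by (simp add: var_def)
          next
            case False
            then have "v j \<le> s * u j" using dv[of j] wv by (simp add: var_def)
            have "j \<notin> supp u \<or> j \<notin> supp v" using disj by auto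
            then have "v j = 0" using \<open>v j \<le> s * u j\<close> by (auto simp: supp_def)
            then show ?thesis using False by (simp add: var_def)
          qed
        qed
        then show False using vI nv inn by simp
      qed
      moreover have "w' \<noteq> u" using w'(3) irr um by auto
      ultimately show ?thesis using w' sw by blast
    qed
  qed
  show ?thesis
    by (rule exI[of _ "\<lambda>a b. lt b a"]) (use slo main in blast)
qed

end
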